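(* Let $\mathbf S$ be a specialization semilattice and let $\widetilde S$, its join $\vee$ and the map $K$ be as in the context. Then $(\widetilde S,\vee,K)$ is a closure semilattice, i.e. for all $x,y\in\widetilde S$: $x\le Kx$, $KKx=Kx$, and $x\le y$ implies $Kx\le Ky$.
   Context: A specialization semilattice is a triple $\mathbf S=(S,\vee,\sqsubseteq)$ where $(S,\vee)$ is a join-semilattice, with induced order $a\le b$ iff $a\vee b=b$, and $\sqsubseteq$ is a binary relation on $S$ such that for all $a,b,c,a_1\in S$: (S1) $a\le b$ implies $a\sqsubseteq b$; (S2) $a\sqsubseteq b$ and $b\sqsubseteq c$ imply $a\sqsubseteq c$; (S3) $a\sqsubseteq b$ and $a_1\sqsubseteq b$ imply $a\vee a_1\sqsubseteq b$. Write $\vee_S,\le_S,\sqsubseteq_S$ for the operations/relations of $\mathbf S$. Let $S^{<\omega}$ be the set of finite subsets of $S$. On $S\times S^{<\omega}$ define $(a,B)\precsim(c,D)$, where $D=\{d_1,\dots,d_k\}$ ($k\ge 0$), to hold iff (a1) there exist $d_1^*,\dots,d_k^*\in S$ with $d_j^*\sqsubseteq_S d_j$ for each $j\le k$ and $a\le_S c\vee_S d_1^*\vee_S\cdots\vee_S d_k^*$ (when $D=\emptyset$ this means $a\le_S c$); and (a2) for every $b\in B$ there is $d\in D$ with $b\sqsubseteq_S d$. Let $(a,B)\sim(c,D)$ iff $(a,B)\precsim(c,D)$ and $(c,D)\precsim(a,B)$; this is an equivalence relation. Let $\widetilde S$ be the set of $\sim$-classes, and $[a,B]$ the class of $(a,B)$.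 The join $[a,B]\vee[c,D]=[a\vee_S c,B\cup D]$ on $\widetilde S$ (with induced order $\le$) and the map $K[a,\{b_1,\dots,b_h\}]=[a,\{a\vee_S b_1\vee_S\cdots\vee_S b_h\}]$ are well defined. A closure semilattice is a join-semilattice with a unary operation $K$ that is extensive, idempotent and isotone. *)

theory Defs
  imports Main
begin

text \<open>A specialization semilattice: the join-semilattice is the type class
  semilattice_sup (join = sup, induced order = less_eq), and sp is the
  specialization relation.\<close>

definition spec_semilattice :: "('a::semilattice_sup \<Rightarrow> 'a \<Rightarrow> bool) \<Rightarrow> bool" where
  "spec_semilattice sp \<longleftrightarrow>
     (\<forall>a b. a \<le> b \<longrightarrow> sp a b) \<and>
     (\<forall>a b c. sp a b \<longrightarrow> sp b c \<longrightarrow> sp a c) \<and>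
     (\<forall>a a1 b. sp a b \<longrightarrow> sp a1 b \<longrightarrow> sp (sup a a1) b)"

text \<open>Representatives: pairs (a, B) with B a finite subset of S.
  The finite join c \<or> d1* \<or> ... \<or> dk* is Finite_Set.fold sup c {d1*,...,dk*}
  (equal to c when D is empty).\<close>

definition spec_pre :: "('a::semilattice_sup \<Rightarrow> 'a \<Rightarrow> bool) \<Rightarrow> 'a \<times> 'a set \<Rightarrow> 'a \<times> 'a set \<Rightarrow> bool" where
  "spec_pre sp x y \<longleftrightarrow>
     (\<exists>f. (\<forall>d\<in>snd y. sp (f d) d) \<and> fst x \<le> Finite_Set.fold sup (fst y) (f ` snd y)) \<and>
     (\<forall>b\<in>snd x. \<exists>d\<in>snd y. sp b d)"

definition spec_sim :: "('a::semilattice_sup \<Rightarrow> 'a \<Rightarrow> bool) \<Rightarrow> 'a \<times> 'a set \<Rightarrow> 'a \<times> 'a set \<Rightarrow> bool" where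
  "spec_sim sp x y \<longleftrightarrow> spec_pre sp x y \<and> spec_pre sp y x"

definition tjoin :: "'a::semilattice_sup \<times> 'a set \<Rightarrow> 'a \<times> 'a set \<Rightarrow> 'a \<times> 'a set" where
  "tjoin x y = (sup (fst x) (fst y), snd x \<union> snd y)"

definition tK :: "'a::semilattice_sup \<times> 'a set \<Rightarrow> 'a \<times> 'a set" where
  "tK x = (fst x, {Finite_Set.fold sup (fst x) (snd x)})"

text \<open>Induced order on the quotient: [x] \<le> [y] iff [x] \<or> [y] = [y],
  i.e. (x joined with y) \<sim> y.\<close>
definition tle :: "('a::semilattice_sup \<Rightarrow> 'a \<Rightarrow> bool) \<Rightarrow> 'a \<times> 'a set \<Rightarrow> 'a \<times> 'a set \<Rightarrow> bool" where
  "tle sp x y \<longleftrightarrow> spec_sim sp (tjoin x y) y"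

end

theory Submission
  imports Defs
begin

lemma fs_insert:
  fixes c :: "'a::semilattice_sup"
  shows "finite S \<Longrightarrow> Finite_Set.fold sup c (insert x S) = sup x (Finite_Set.fold sup c S)"
proof -
  interpret comp_fun_idem "sup :: 'a \<Rightarrow> 'a \<Rightarrow> 'a" by (rule comp_fun_idem_sup)
  show "finite S \<Longrightarrow> Finite_Set.fold sup c (insert x S) = sup x (Finite_Set.fold sup c S)"
    by (rule fold_insert_idem)
qed

lemma fs_le:
  fixes c :: "'a::semilattice_sup"
  assumes "finite S"
  shows "Finite_Set.fold sup c S \<le> z \<longleftrightarrow> c \<le> z \<and> (\<forall>s\<in>S. s \<le> z)"
  using assms by (induction S rule: finite_induct) (auto simp: fs_insert)

lemma fs_ge:
  fixes c :: "'a::semilattice_sup"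
  assumes "finite S"
  shows "c \<le> Finite_Set.fold sup c S" "s \<in> S \<Longrightarrow> s \<le> Finite_Set.fold sup c S"
  using fs_le[OF assms, of c "Finite_Set.fold sup c S"] by auto

lemma fs_sp:
  fixes c :: "'a::semilattice_sup"
  assumes ss: "spec_semilattice sp" and "finite S" and "sp c n" and "\<forall>s\<in>S. sp s n"
  shows "sp (Finite_Set.fold sup c S) n"
  using assms(2-4)
proof (induction S rule: finite_induct)
  case empty then show ?case by simp
next
  case (insert x F)
  then show ?case using ss unfolding spec_semilattice_def by (auto simp: fs_insert)
qed

lemma fs_single:
  fixes c :: "'a::semilattice_sup"
  shows "Finite_Set.fold sup c {x} = sup x c"
  using fs_insert[of "{}" c x] by simp

lemma pre_refl:
  assumes ss: "spec_semilattice sp" and "finite (snd x)"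
  shows "spec_pre sp x x"
  unfolding spec_pre_def
proof
  show "\<exists>f. (\<forall>d\<in>snd x. sp (f d) d) \<and> fst x \<le> Finite_Set.fold sup (fst x) (f ` snd x)"
    apply (rule exI[of _ id])
    using ss assms(2) fs_ge(1)[of "snd x" "fst x"] unfolding spec_semilattice_def by auto
  show "\<forall>b\<in>snd x. \<exists>d\<in>snd x. sp b d" using ss unfolding spec_semilattice_def by auto
qed

theorem claim3p7:
  fixes sp :: "'a::semilattice_sup \<Rightarrow> 'a \<Rightarrow> bool"
  assumes "spec_semilattice sp"
  shows "\<forall>x y. finite (snd x) \<longrightarrow> finite (snd y) \<longrightarrow>
           tle sp x (tK x) \<and>
           spec_sim sp (tK (tK x)) (tK x) \<and>
           (tle sp x y \<longrightarrow> tle sp (tK x) (tK y))"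
proof (intro allI impI conjI)
  have S1: "\<And>a b. a \<le> b \<Longrightarrow> sp a b" and S2: "\<And>a b c. sp a b \<Longrightarrow> sp b c \<Longrightarrow> sp a c"
    and S3: "\<And>a a1 b. sp a b \<Longrightarrow> sp a1 b \<Longrightarrow> sp (sup a a1) b"
    using assms unfolding spec_semilattice_def by blast+
  fix x y :: "'a \<times> 'a set"
  assume fx: "finite (snd x)" and fy: "finite (snd y)"
  obtain a B where x: "x = (a, B)" by fastforce
  obtain c D where y: "y = (c, D)" by fastforce
  from fx fy have fB: "finite B" and fD: "finite D" using x y by auto
  define m where "m = Finite_Set.fold sup a B"
  define n where "n = Finite_Set.fold sup c D"
  have am: "a \<le> m" and Bm: "\<And>b. b \<in> B \<Longrightarrow> b \<le> m" using fs_ge[OF fB] m_def by auto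
  have cn: "c \<le> n" and Dn: "\<And>d. d \<in> D \<Longrightarrow> d \<le> n" using fs_ge[OF fD] n_def by auto
  have tKx: "tK x = (a, {m})" using x m_def by (simp add: tK_def)
  have tKy: "tK y = (c, {n})" using y n_def by (simp add: tK_def)
  have "tK (a, {m}) = (a, {m})" unfolding tK_def fst_conv snd_conv fs_single using sup_absorb1[OF am] by simp
  then have tKKx: "tK (tK x) = tK x" unfolding tKx .
  show "spec_sim sp (tK (tK x)) (tK x)"
    unfolding tKKx spec_sim_def using pre_refl[OF assms] tKx by simp
  have fBm: "finite (B \<union> {m})" using fB by simp
  have p1: "spec_pre sp (sup a a, B \<union> {m}) (a, {m})"
    unfolding spec_pre_def using S1 am Bm by (auto simp: fs_single intro!: exI[of _ id])
  have p2: "spec_pre sp (a, {m}) (sup a a, B \<union> {m})"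
    unfolding spec_pre_def using S1 fs_ge(1)[OF finite_imageI[OF fBm], of "sup a a" id]
    by (auto intro!: exI[of _ id])
  have "spec_sim sp (tjoin (a, B) (a, {m})) (a, {m})"
    unfolding spec_sim_def tjoin_def using p1 p2 by simp
  then show "tle sp x (tK x)" unfolding tle_def tKx by (simp add: x)
  assume "tle sp x y"
  then have h: "spec_pre sp (sup a c, B \<union> D) (c, D)"
    unfolding tle_def spec_sim_def tjoin_def x y by simp
  then obtain f where fD': "\<forall>d\<in>D. sp (f d) d" and le: "sup a c \<le> Finite_Set.fold sup c (f ` D)"
    and a2: "\<forall>b\<in>B \<union> D. \<exists>d\<in>D. sp b d"
    unfolding spec_pre_def by auto
  define g where "g = Finite_Set.fold sup c (f ` D)"
  have gn: "sp g n" unfolding g_def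
    using fs_sp[OF assms, of "f ` D" c n] fD fD' S1 S2 cn Dn by blast
  have an: "sp a n" using S1 S2 le gn unfolding g_def[symmetric] by (meson le_supE)
  have Bn: "\<forall>b\<in>B. sp b n" using a2 S1 S2 Dn by blast
  have mn: "sp m n" unfolding m_def using fs_sp[OF assms fB an Bn] .
  have fwd: "spec_pre sp (sup a c, {m, n}) (c, {n})"
    unfolding spec_pre_def
    using le gn mn S1 unfolding g_def[symmetric]
    by (auto simp: fs_single intro!: exI[of _ "\<lambda>_. g"] le_supI1)
  have bwd: "spec_pre sp (c, {n}) (sup a c, {m, n})"
    unfolding spec_pre_def using S1
    by (auto simp: fs_insert fs_single intro!: exI[of _ id] le_supI2)
  show "tle sp (tK x) (tK y)"
    unfolding tle_def spec_sim_def tjoin_def tKx tKy using fwd bwd by (simp add: insert_commute)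
qed

end
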